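(* For every polynomial knot $\phi:\mathbb R\to\mathbb R^3$ there exist a nonzero vector $v\in\mathbb R^3$ and a smooth map $F:[0,1]\times\mathbb R\to\mathbb R^3$ such that for every $s\in[0,1]$ the map $F_s=F(s,\cdot)$ is a polynomial knot, $F_0(t)=tv$ for all $t\in\mathbb R$, and $F_1=\phi$.
   Context: A polynomial knot is a map $\phi:\mathbb R\to\mathbb R^3$ whose components are real polynomials and which is a smooth embedding, i.e. $\phi$ is injective and $\phi'(t)\ne0$ for all $t\in\mathbb R$. *)

theory Defs
  imports "HOL-Analysis.Analysis" "HOL-Computational_Algebra.Polynomial"
begin

definition polynomial_knot :: "(real \<Rightarrow> real^3) \<Rightarrow> bool" where
  "polynomial_knot \<phi> \<longleftrightarrow>
     (\<forall>i. \<exists>p :: real poly. \<forall>t. \<phi> t $ i = poly p t) \<and>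
     inj \<phi> \<and>
     (\<forall>t. \<phi> differentiable (at t) \<and> vector_derivative \<phi> (at t) \<noteq> 0)"

text \<open>For a finite-dimensional
  domain this is exactly: all partial derivatives of all orders exist and are continuous.\<close>
definition smooth_on :: "'a::real_normed_vector set \<Rightarrow> ('a \<Rightarrow> 'b::real_normed_vector) \<Rightarrow> bool" where
  "smooth_on S f \<longleftrightarrow>
     (\<exists>\<F>. f \<in> \<F> \<and>
        (\<forall>g\<in>\<F>. continuous_on S g \<and>
           (\<exists>g'. (\<forall>x\<in>S. (g has_derivative g' x) (at x within S)) \<and>
                 (\<forall>v. (\<lambda>x. g' x v) \<in> \<F>))))"

end

theory Submission imports Defs begin

inductive_set SF :: "(real \<times> real \<Rightarrow> real) set" where
  SF_const: "(\<lambda>x. c) \<in> SF"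
| SF_fst: "fst \<in> SF"
| SF_snd: "snd \<in> SF"
| SF_add: "f \<in> SF \<Longrightarrow> g \<in> SF \<Longrightarrow> (\<lambda>x. f x + g x) \<in> SF"
| SF_mult: "f \<in> SF \<Longrightarrow> g \<in> SF \<Longrightarrow> (\<lambda>x. f x * g x) \<in> SF"

lemma SF_deriv:
  assumes "f \<in> SF"
  shows "\<exists>D. (\<forall>x. (f has_derivative D x) (at x)) \<and> (\<forall>v. (\<lambda>x. D x v) \<in> SF)"
  using assms
proof induction
  case (SF_const c)
  show ?case
    by (rule exI[of _ "\<lambda>x h. 0"]) (auto intro: SF.intros)
next
  case SF_fst
  show ?case
    by (rule exI[of _ "\<lambda>x h. fst h"])
       (auto intro: SF.intros bounded_linear.has_derivative[OF bounded_linear_fst, OF has_derivative_ident])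
next
  case SF_snd
  show ?case
    by (rule exI[of _ "\<lambda>x h. snd h"])
       (auto intro: SF.intros bounded_linear.has_derivative[OF bounded_linear_snd, OF has_derivative_ident])
next
  case (SF_add f g)
  then obtain Df Dg where f1: "\<And>x. (f has_derivative Df x) (at x)" and f2: "\<And>v. (\<lambda>x. Df x v) \<in> SF"
    and g1: "\<And>x. (g has_derivative Dg x) (at x)" and g2: "\<And>v. (\<lambda>x. Dg x v) \<in> SF" by metis
  have "(\<forall>x. ((\<lambda>x. f x + g x) has_derivative (\<lambda>h. Df x h + Dg x h)) (at x)) \<and> (\<forall>v. (\<lambda>x. Df x v + Dg x v) \<in> SF)"
    using has_derivative_add[OF f1 g1] SF.SF_add[OF f2 g2] by blast
  then show ?case by (rule exI[of _ "\<lambda>x h. Df x h + Dg x h"])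
next
  case (SF_mult f g)
  then obtain Df Dg where f1: "\<And>x. (f has_derivative Df x) (at x)" and f2: "\<And>v. (\<lambda>x. Df x v) \<in> SF"
    and g1: "\<And>x. (g has_derivative Dg x) (at x)" and g2: "\<And>v. (\<lambda>x. Dg x v) \<in> SF" by metis
  have "(\<forall>x. ((\<lambda>x. f x * g x) has_derivative (\<lambda>h. f x * Dg x h + Df x h * g x)) (at x)) \<and>
        (\<forall>v. (\<lambda>x. f x * Dg x v + Df x v * g x) \<in> SF)"
    using has_derivative_mult[OF f1 g1] SF.SF_add[OF SF.SF_mult[OF SF_mult.hyps(1) g2] SF.SF_mult[OF f2 SF_mult.hyps(2)]] by blast
  then show ?case by (rule exI[of _ "\<lambda>x h. f x * Dg x h + Df x h * g x"])
qed

lemma SF_poly: "f \<in> SF \<Longrightarrow> (\<lambda>x. poly q (f x)) \<in> SF"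
  by (induction q) (auto intro!: SF.intros)

lemma vec_has_derivative:
  fixes f :: "'a::real_normed_vector \<Rightarrow> real^'n"
  assumes "\<And>i. ((\<lambda>x. f x $ i) has_derivative (\<lambda>h. f' h $ i)) (at a within S)"
  shows "(f has_derivative f') (at a within S)"
proof (rule has_derivative_componentwise_within[THEN iffD2], rule ballI)
  fix i :: "real^'n" assume "i \<in> Basis"
  then have "i \<in> (\<Union>j. \<Union>u\<in>(Basis::real set). {axis j u})" using Basis_vec_def by blast
  then obtain j where j: "i = axis j 1" by (simp add: Basis_real_def) blast
  show "((\<lambda>x. f x \<bullet> i) has_derivative (\<lambda>x. f' x \<bullet> i)) (at a within S)"
    unfolding j cart_eq_inner_axis[symmetric] by (rule assms)
qed

lemma vec_has_vector_derivative:
  fixes g :: "real \<Rightarrow> real^'n"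
  assumes "\<And>i. ((\<lambda>t. g t $ i) has_real_derivative (d $ i)) (at x)"
  shows "(g has_vector_derivative d) (at x)"
  unfolding has_vector_derivative_def
proof (rule vec_has_derivative)
  fix i
  have e: "(\<lambda>h. (h *\<^sub>R d) $ i) = (*) (d $ i)" by (auto simp: fun_eq_iff)
  show "((\<lambda>t. g t $ i) has_derivative (\<lambda>h. (h *\<^sub>R d) $ i)) (at x)"
    unfolding e using assms[of i] by (simp add: has_field_derivative_def)
qed

lemma VF_smooth:
  fixes F :: "real \<times> real \<Rightarrow> real^3"
  assumes "\<And>i. (\<lambda>x. F x $ i) \<in> SF"
  shows "smooth_on S F"
  unfolding smooth_on_def
proof (intro exI[of _ "{g. \<forall>i. (\<lambda>x. g x $ i) \<in> SF}"] conjI ballI)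
  show "F \<in> {g. \<forall>i. (\<lambda>x. g x $ i) \<in> SF}" using assms by blast
  fix g :: "real \<times> real \<Rightarrow> real^3"
  assume "g \<in> {g. \<forall>i. (\<lambda>x. g x $ i) \<in> SF}"
  then have "\<forall>i. \<exists>D. (\<forall>x. ((\<lambda>x. g x $ i) has_derivative D x) (at x)) \<and> (\<forall>v. (\<lambda>x. D x v) \<in> SF)"
    using SF_deriv by blast
  then have "\<exists>D. \<forall>i. (\<forall>x. ((\<lambda>x. g x $ i) has_derivative D i x) (at x)) \<and> (\<forall>v. (\<lambda>x. D i x v) \<in> SF)"
    by (rule choice[of "\<lambda>i D. (\<forall>x. ((\<lambda>x. g x $ i) has_derivative D x) (at x)) \<and> (\<forall>v. (\<lambda>x. D x v) \<in> SF)"])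
  then obtain D where D0: "\<forall>i. (\<forall>x. ((\<lambda>x. g x $ i) has_derivative D i x) (at x)) \<and> (\<forall>v. (\<lambda>x. D i x v) \<in> SF)"
    by blast
  have D: "\<And>i x. ((\<lambda>x. g x $ i) has_derivative D i x) (at x)" "\<And>i v. (\<lambda>x. D i x v) \<in> SF"
    using D0 by blast+
  have hd: "(g has_derivative (\<lambda>h. \<chi> i. D i x h)) (at x within S)" for x
    by (rule vec_has_derivative) (simp add: has_derivative_at_withinI D)
  show "continuous_on S g"
    by (rule has_derivative_continuous_on) (rule hd)
  show "\<exists>g'. (\<forall>x\<in>S. (g has_derivative g' x) (at x within S)) \<and>
          (\<forall>v. (\<lambda>x. g' x v) \<in> {g. \<forall>i. (\<lambda>x. g x $ i) \<in> SF})"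
    by (rule exI[of _ "\<lambda>x h. \<chi> i. D i x h"]) (simp add: hd D)
qed

theorem mainTheorem7:
  fixes \<phi> :: "real \<Rightarrow> real^3"
  assumes "polynomial_knot \<phi>"
  shows "\<exists>v :: real^3. v \<noteq> 0 \<and>
           (\<exists>F :: real \<times> real \<Rightarrow> real^3.
              smooth_on ({0..1} \<times> UNIV) F \<and>
              (\<forall>s\<in>{0..1}. polynomial_knot (\<lambda>t. F (s, t))) \<and>
              (\<forall>t. F (0, t) = t *\<^sub>R v) \<and>
              (\<forall>t. F (1, t) = \<phi> t))"
proof -
  have k1: "\<forall>i. \<exists>p :: real poly. \<forall>t. \<phi> t $ i = poly p t" and k2: "inj \<phi>"
    and k3: "\<And>t. vector_derivative \<phi> (at t) \<noteq> 0"
    using assms unfolding polynomial_knot_def by auto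
  have "\<forall>i. \<exists>a r. \<forall>t. \<phi> t $ i = a + t * poly r t"
  proof
    fix i
    obtain q where q: "\<forall>t. \<phi> t $ i = poly q t" using k1 by blast
    obtain a r where "q = pCons a r" by (rule pCons_cases[of q])
    then have "\<forall>t. \<phi> t $ i = a + t * poly r t" using q by simp
    then show "\<exists>a r. \<forall>t. \<phi> t $ i = a + t * poly r t" by blast
  qed
  then have "\<exists>a. \<forall>i. \<exists>r. \<forall>t. \<phi> t $ i = a i + t * poly r t"
    by (rule choice[of "\<lambda>i a. \<exists>r. \<forall>t. \<phi> t $ i = a + t * poly r t"])
  then obtain a where "\<forall>i. \<exists>r. \<forall>t. \<phi> t $ i = a i + t * poly r t" by blast
  then have "\<exists>r. \<forall>i. \<forall>t. \<phi> t $ i = a i + t * poly (r i) t"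
    by (rule choice[of "\<lambda>i r. \<forall>t. \<phi> t $ i = a i + t * poly r t"])
  then obtain r where "\<forall>i. \<forall>t. \<phi> t $ i = a i + t * poly (r i) t" by blast
  then have ar: "\<And>i t. \<phi> t $ i = a i + t * poly (r i) t" by blast
  define dphi where "dphi x = (\<chi> i. poly (r i) x + x * poly (pderiv (r i)) x)" for x
  have dpoly: "((\<lambda>t. c + t * poly (r i) (s * t)) has_real_derivative dphi (s * t) $ i) (at t)" for c s t i
  proof -
    have "((\<lambda>t. c + t * poly (r i) (s * t)) has_real_derivative
       (poly (r i) (s * t) + t * (poly (pderiv (r i)) (s * t) * s))) (at t)"
      by (auto intro!: derivative_eq_intros poly_DERIV)
    moreover have "poly (r i) (s * t) + t * (poly (pderiv (r i)) (s * t) * s) = dphi (s * t) $ i"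
      by (simp add: dphi_def mult_ac)
    ultimately show ?thesis by simp
  qed
  have hphi: "(\<phi> has_vector_derivative dphi x) (at x)" for x
  proof (rule vec_has_vector_derivative)
    fix i
    show "((\<lambda>t. \<phi> t $ i) has_real_derivative dphi x $ i) (at x)"
      using dpoly[where c="a i" and s=1 and t=x and i=i] by (simp add: ar)
  qed
  have dphi: "dphi x \<noteq> 0" for x
    using k3[of x] vector_derivative_at[OF hphi[of x]] by simp
  define F where "F = (\<lambda>(s,t). \<chi> i. s * a i + t * poly (r i) (s * t) :: real^3)"
  have Fst: "F (s,t) $ i = s * a i + t * poly (r i) (s * t)" for s t i
    by (simp add: F_def)
  have smooth: "smooth_on ({0..1} \<times> UNIV) F"
  proof (rule VF_smooth)
    fix i
    have "(\<lambda>x. F x $ i) = (\<lambda>x. fst x * a i + snd x * poly (r i) (fst x * snd x))"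
      by (auto simp: fun_eq_iff Fst)
    also have "\<dots> \<in> SF"
      by (intro SF_add SF_mult SF_fst SF_snd SF_const SF_poly)
    finally show "(\<lambda>x. F x $ i) \<in> SF" .
  qed
  have Fd: "((\<lambda>t. F (s, t)) has_vector_derivative dphi (s * t)) (at t)" for s t
  proof (rule vec_has_vector_derivative)
    fix i
    show "((\<lambda>t. F (s, t) $ i) has_real_derivative dphi (s * t) $ i) (at t)"
      using dpoly[where c="s * a i" and s=s and t=t and i=i] by (simp add: Fst)
  qed
  define v where "v = dphi 0"
  have F0: "F (0, t) = t *\<^sub>R v" for t
    by (simp add: vec_eq_iff Fst v_def dphi_def)
  have F1: "F (1, t) = \<phi> t" for t
    by (simp add: vec_eq_iff Fst ar)
  have knot: "polynomial_knot (\<lambda>t. F (s, t))" if s: "s \<in> {0..1}" for s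
    unfolding polynomial_knot_def
  proof (intro conjI allI)
    fix i
    show "\<exists>p. \<forall>t. F (s, t) $ i = poly p t"
      by (rule exI[of _ "pCons (s * a i) (pcompose (r i) [:0, s:])"])
         (simp add: Fst poly_pcompose algebra_simps)
  next
    fix t
    show "(\<lambda>t. F (s, t)) differentiable at t" using Fd by (rule differentiableI_vector)
    show "vector_derivative (\<lambda>t. F (s, t)) (at t) \<noteq> 0"
      using vector_derivative_at[OF Fd] dphi by simp
  next
    show "inj (\<lambda>t. F (s, t))"
    proof (cases "s = 0")
      case True
      then show ?thesis using dphi[of 0] by (auto simp: inj_on_def F0 v_def)
    next
      case False
      show ?thesis
      proof (rule injI)
        fix t1 t2 assume eq: "F (s, t1) = F (s, t2)"
        have "\<phi> (s * t1) = \<phi> (s * t2)"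
        proof (subst vec_eq_iff, rule allI)
          fix i
          have "s * a i + t1 * poly (r i) (s * t1) = s * a i + t2 * poly (r i) (s * t2)"
            using arg_cong[OF eq, of "\<lambda>w. w $ i"] by (simp add: Fst)
          then have "t1 * poly (r i) (s * t1) = t2 * poly (r i) (s * t2)" by simp
          then show "\<phi> (s * t1) $ i = \<phi> (s * t2) $ i" by (simp add: ar)
        qed
        then have "s * t1 = s * t2" by (rule injD[OF k2])
        then show "t1 = t2" using False by simp
      qed
    qed
  qed
  have "v \<noteq> 0" using dphi[of 0] by (simp add: v_def)
  then show ?thesis
  proof (intro exI[of _ v] conjI exI[of _ F])
    show "\<forall>s\<in>{0..1}. polynomial_knot (\<lambda>t. F (s, t))" using knot by (rule ballI)
  qed (use smooth F0 F1 in auto)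
qed

end
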